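(* For proposition letters $p,o,r,q$, the formula $\mathcal{K}hm(p,o,r)\wedge\mathcal{K}hm(r,o,q)\wedge\mathcal{U}(r\to o)\to\mathcal{K}hm(p,o,q)$ is valid, i.e., true at every state of every model.
   Context: Fix a countable set of proposition letters $\mathbf{P}$ and a countable non-empty set of action symbols $\Sigma$. Formulas: $\phi ::= p \mid \neg\phi \mid (\phi\wedge\phi) \mid \mathcal{K}hm(\phi,\phi,\phi)$; $\top,\bot,\to$ as usual; $\mathcal{U}\phi$ abbreviates $\mathcal{K}hm(\neg\phi,\top,\bot)$. A model is $(S,\mathcal{R},\mathcal{V})$ with $S\neq\emptyset$, $\mathcal{R}:\Sigma\to 2^{S\times S}$, $\mathcal{V}:S\to 2^{\mathbf{P}}$. For $\sigma=a_1\cdots a_n\in\Sigma^*$, $s\xrightarrow{\sigma}t$ means there is a path $s\xrightarrow{a_1}\cdots\xrightarrow{a_n}t$ ($s\xrightarrow{\epsilon}s$ for the empty sequence); $\sigma_k=a_1\cdots a_k$, $\sigma_0=\epsilon$. $\sigma$ is strongly $\chi$-executable at $s'$ if for each $0\le k<n$, every $t$ with $s'\xrightarrow{\sigma_k}t$ has an $a_{k+1}$-successor, and every $t$ with $s'\xrightarrow{\sigma_k}t$ for $0<k<n$ satisfies $\chi$. $\mathcal{M},s\vDash\mathcal{K}hm(\psi,\chi,\phi)$ iff there is $\sigma\in\Sigma^*$ such that for every $s'$ with $\mathcal{M},s'\vDash\psi$, $\sigma$ is strongly $\chi$-executable at $s'$ and $\mathcal{M},t\vDash\phi$ for all $t$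 with $s'\xrightarrow{\sigma}t$; atoms and Booleans are interpreted as usual ($\mathcal{M},s\vDash p$ iff $p\in\mathcal{V}(s)$). Consequently $\mathcal{M},s\vDash\mathcal{U}\phi$ iff $\phi$ holds at all states of $\mathcal{M}$. *)

theory Defs
  imports Main "HOL-Library.Countable"
begin

datatype 'p form =
    Prop 'p
  | Neg "'p form"
  | Conj "'p form" "'p form"
  | Khm "'p form" "'p form" "'p form"

text \<open>Derived connectives. Top is any tautology; we use a fixed (arbitrary) letter.\<close>
definition Top :: "'p form" where
  "Top = Neg (Conj (Prop undefined) (Neg (Prop undefined)))"
definition Bot :: "'p form" where "Bot = Neg Top"
definition Disj :: "'p form \<Rightarrow> 'p form \<Rightarrow> 'p form" where
  "Disj a b = Neg (Conj (Neg a) (Neg b))"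
definition Imp :: "'p form \<Rightarrow> 'p form \<Rightarrow> 'p form" where
  "Imp a b = Neg (Conj a (Neg b))"
definition Univ :: "'p form \<Rightarrow> 'p form" where
  "Univ a = Khm (Neg a) Top Bot"

record ('s, 'a, 'p) model =
  St :: "'s set"
  Rel :: "'a \<Rightarrow> ('s \<times> 's) set"
  Val :: "'s \<Rightarrow> 'p set"

definition is_model :: "('s, 'a, 'p) model \<Rightarrow> bool" where
  "is_model M \<longleftrightarrow> St M \<noteq> {} \<and> (\<forall>a. Rel M a \<subseteq> St M \<times> St M)"

fun reach :: "('s, 'a, 'p) model \<Rightarrow> 'a list \<Rightarrow> 's \<Rightarrow> 's \<Rightarrow> bool" where
  "reach M [] s t \<longleftrightarrow> s = t"
| "reach M (a # \<sigma>) s t \<longleftrightarrow> (\<exists>u. (s, u) \<in> Rel M a \<and> reach M \<sigma> u t)"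

text \<open>sigma strongly chi-executable at s' (chi given as the set of states satisfying it).\<close>
definition strongly_exec :: "('s, 'a, 'p) model \<Rightarrow> 's set \<Rightarrow> 'a list \<Rightarrow> 's \<Rightarrow> bool" where
  "strongly_exec M X \<sigma> s' \<longleftrightarrow>
     (\<forall>k < length \<sigma>. \<forall>t. reach M (take k \<sigma>) s' t \<longrightarrow>
        (\<exists>u. (t, u) \<in> Rel M (\<sigma> ! k)) \<and> (0 < k \<longrightarrow> t \<in> X))"

fun sat :: "('s, 'a, 'p) model \<Rightarrow> 's \<Rightarrow> 'p form \<Rightarrow> bool" where
  "sat M s (Prop p) \<longleftrightarrow> p \<in> Val M s"
| "sat M s (Neg \<phi>) \<longleftrightarrow> \<not> sat M s \<phi>"
| "sat M s (Conj \<phi> \<psi>) \<longleftrightarrow> sat M s \<phi> \<and> sat M s \<psi>"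
| "sat M s (Khm \<psi> \<chi> \<phi>) \<longleftrightarrow>
     (\<exists>\<sigma>::'a list. \<forall>s' \<in> St M. sat M s' \<psi> \<longrightarrow>
        strongly_exec M {t \<in> St M. sat M t \<chi>} \<sigma> s' \<and>
        (\<forall>t. reach M \<sigma> s' t \<longrightarrow> sat M t \<phi>))"

end

theory Submission
  imports Defs
begin

lemma reach_append: "reach M (a @ b) s t \<longleftrightarrow> (\<exists>u. reach M a s u \<and> reach M b u t)"
  by (induction a arbitrary: s) auto

lemma reach_St: "is_model M \<Longrightarrow> s \<in> St M \<Longrightarrow> reach M \<sigma> s t \<Longrightarrow> t \<in> St M"
  by (induction \<sigma> arbitrary: s) (auto simp: is_model_def)

lemma exec_reach_take:
  assumes "strongly_exec M X \<sigma> s" "k \<le> length \<sigma>"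
  shows "\<exists>t. reach M (take k \<sigma>) s t"
  using assms(2)
proof (induction k)
  case 0 then show ?case by simp
next
  case (Suc k)
  then obtain t where t: "reach M (take k \<sigma>) s t" by auto
  have "k < length \<sigma>" using Suc by simp
  then obtain u where "(t, u) \<in> Rel M (\<sigma> ! k)" using assms(1) t unfolding strongly_exec_def by blast
  then have "reach M (take k \<sigma> @ [\<sigma> ! k]) s u" using t by (auto simp: reach_append)
  then show ?case using \<open>k < length \<sigma>\<close> by (auto simp add: take_Suc_conv_app_nth)
qed

lemma exec_reach: "strongly_exec M X \<sigma> s \<Longrightarrow> \<exists>t. reach M \<sigma> s t"
  using exec_reach_take[of M X \<sigma> s "length \<sigma>"] by simp

lemma sat_Top: "sat M s Top" by (simp add: Top_def)

theorem mainTheorem4: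
  fixes p o' r q :: "'p::countable"
  shows "\<forall>M :: ('s, 'a::countable, 'p) model. is_model M \<longrightarrow>
           (\<forall>s \<in> St M. sat M s
              (Imp (Conj (Conj (Khm (Prop p) (Prop o') (Prop r))
                               (Khm (Prop r) (Prop o') (Prop q)))
                         (Univ (Imp (Prop r) (Prop o'))))
                   (Khm (Prop p) (Prop o') (Prop q))))"
proof (intro allI impI ballI)
  fix M :: "('s, 'a, 'p) model" and s
  assume M: "is_model M" and "s \<in> St M"
  let ?X = "{t \<in> St M. sat M t (Prop o')}"
  show "sat M s (Imp (Conj (Conj (Khm (Prop p) (Prop o') (Prop r))
                               (Khm (Prop r) (Prop o') (Prop q)))
                         (Univ (Imp (Prop r) (Prop o'))))
                   (Khm (Prop p) (Prop o') (Prop q)))"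
  proof -
    have main: "sat M s (Khm (Prop p) (Prop o') (Prop q))"
      if K1: "sat M s (Khm (Prop p) (Prop o') (Prop r))"
      and K2: "sat M s (Khm (Prop r) (Prop o') (Prop q))"
      and U: "sat M s (Univ (Neg (Conj (Prop r) (Neg (Prop o')))))"
    proof -
    have RO: "\<And>t. t \<in> St M \<Longrightarrow> r \<in> Val M t \<Longrightarrow> o' \<in> Val M t"
    proof (rule ccontr)
      fix t assume t: "t \<in> St M" "r \<in> Val M t" "o' \<notin> Val M t"
      from U obtain \<sigma> where H: "\<forall>s'\<in>St M. sat M s' (Neg (Neg (Conj (Prop r) (Neg (Prop o'))))) \<longrightarrow>
        strongly_exec M {t \<in> St M. sat M t Top} \<sigma> s' \<and> (\<forall>t. reach M \<sigma> s' t \<longrightarrow> sat M t Bot)"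
        unfolding Univ_def by auto
      then have "strongly_exec M {t \<in> St M. sat M t Top} \<sigma> t" "\<forall>u. reach M \<sigma> t u \<longrightarrow> sat M u Bot"
        using t by auto
      then show False using exec_reach by (fastforce simp: Bot_def sat_Top)
    qed
    from K1 obtain \<sigma>1 where H1: "\<forall>s'\<in>St M. p \<in> Val M s' \<longrightarrow>
        strongly_exec M ?X \<sigma>1 s' \<and> (\<forall>t. reach M \<sigma>1 s' t \<longrightarrow> r \<in> Val M t)" by auto
    from K2 obtain \<sigma>2 where H2: "\<forall>s'\<in>St M. r \<in> Val M s' \<longrightarrow>
        strongly_exec M ?X \<sigma>2 s' \<and> (\<forall>t. reach M \<sigma>2 s' t \<longrightarrow> q \<in> Val M t)" by auto
    have "\<forall>s'\<in>St M. p \<in> Val M s' \<longrightarrow>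
        strongly_exec M ?X (\<sigma>1 @ \<sigma>2) s' \<and> (\<forall>t. reach M (\<sigma>1 @ \<sigma>2) s' t \<longrightarrow> q \<in> Val M t)"
    proof (intro ballI impI conjI allI)
      fix s' assume s': "s' \<in> St M" "p \<in> Val M s'"
      have E1: "strongly_exec M ?X \<sigma>1 s'" and R1: "\<And>t. reach M \<sigma>1 s' t \<Longrightarrow> r \<in> Val M t"
        using H1 s' by auto
      have mid: "\<And>u. reach M \<sigma>1 s' u \<Longrightarrow> u \<in> St M \<and> r \<in> Val M u"
        using R1 reach_St[OF M s'(1)] by blast
      show "\<And>t. reach M (\<sigma>1 @ \<sigma>2) s' t \<Longrightarrow> q \<in> Val M t"
        using mid H2 by (auto simp: reach_append)
      show "strongly_exec M ?X (\<sigma>1 @ \<sigma>2) s'"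
        unfolding strongly_exec_def
      proof (intro allI impI)
        fix k t assume k: "k < length (\<sigma>1 @ \<sigma>2)" and rt: "reach M (take k (\<sigma>1 @ \<sigma>2)) s' t"
        show "(\<exists>u. (t, u) \<in> Rel M ((\<sigma>1 @ \<sigma>2) ! k)) \<and> (0 < k \<longrightarrow> t \<in> ?X)"
        proof (cases "k < length \<sigma>1")
          case True
          then show ?thesis using E1 rt unfolding strongly_exec_def by (auto simp: nth_append)
        next
          case False
          define j where "j = k - length \<sigma>1"
          have kj: "k = length \<sigma>1 + j" "j < length \<sigma>2" using False k j_def by auto
          from rt obtain u where u1: "reach M \<sigma>1 s' u" and u2: "reach M (take j \<sigma>2) u t"
            using kj by (auto simp: reach_append)
          have uS: "u \<in> St M" "r \<in> Val M u" using mid u1 by auto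
          have E2: "strongly_exec M ?X \<sigma>2 u" using H2 uS by auto
          have A: "\<exists>v. (t, v) \<in> Rel M (\<sigma>2 ! j)" and B: "0 < j \<longrightarrow> t \<in> ?X"
            using E2 u2 kj unfolding strongly_exec_def by auto
          have C: "j = 0 \<Longrightarrow> t \<in> ?X" using u2 uS RO by simp
          show ?thesis using A B C kj by (auto simp: nth_append)
        qed
      qed
    qed
    then show "sat M s (Khm (Prop p) (Prop o') (Prop q))" by (simp only: sat.simps) blast
  qed
  then show ?thesis unfolding Imp_def by (simp only: sat.simps) blast
  qed
qed

end
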